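(* Let $D$ be a digraph with at least two vertices and $s\in V(D)$ such that every vertex of $D$ is reachable from $s$, and let $B_s$ be the diblock of $s$ in $D$. Let $T$ be an out-tree in $D$ (a subgraph of $D$) whose root $r$ lies in $B_s$ and which has $\ell$ leaves. Then $D$ contains an out-tree rooted at $s$ with at least $(\ell-1)/2$ leaves.
   Context: Digraphs are finite and without loops; paths are directed. An out-tree is an oriented tree with exactly one vertex of in-degree zero (its root); its leaves are its vertices of out-degree zero. A vertex $v$ is bi-reachable from $r$ if there are two internally vertex-disjoint directed paths from $r$ to $v$. For a digraph $H$ with at least two vertices and $r\in V(H)$ such that every vertex of $H$ is reachable from $r$, the diblock $B_r$ of $r$ in $H$ is the set of all vertices bi-reachable from $r$, together with $r$ and all out-neighbours of $r$. *)

theory Defs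
  imports Complex_Main
begin

definition digraph :: "'a set \<Rightarrow> ('a \<times> 'a) set \<Rightarrow> bool" where
  "digraph V A \<longleftrightarrow> finite V \<and> A \<subseteq> V \<times> V \<and> (\<forall>v. (v, v) \<notin> A)"

definition dipath :: "('a \<times> 'a) set \<Rightarrow> 'a \<Rightarrow> 'a \<Rightarrow> 'a list \<Rightarrow> bool" where
  "dipath A u v p \<longleftrightarrow> p \<noteq> [] \<and> distinct p \<and> hd p = u \<and> last p = v \<and>
     (\<forall>i. Suc i < length p \<longrightarrow> (p ! i, p ! Suc i) \<in> A)"

definition bireachable :: "('a \<times> 'a) set \<Rightarrow> 'a \<Rightarrow> 'a \<Rightarrow> bool" where
  "bireachable A r v \<longleftrightarrow> (\<exists>p q. dipath A r v p \<and> dipath A r v q \<and> p \<noteq> q \<and>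
      set p \<inter> set q \<subseteq> {r, v})"

definition diblock :: "'a set \<Rightarrow> ('a \<times> 'a) set \<Rightarrow> 'a \<Rightarrow> 'a set" where
  "diblock V A r = {v \<in> V. bireachable A r v} \<union> {r} \<union> {v. (r, v) \<in> A}"

definition in_degree :: "('a \<times> 'a) set \<Rightarrow> 'a \<Rightarrow> nat" where
  "in_degree A v = card {u. (u, v) \<in> A}"

definition out_degree :: "('a \<times> 'a) set \<Rightarrow> 'a \<Rightarrow> nat" where
  "out_degree A v = card {w. (v, w) \<in> A}"

definition oriented_tree :: "'a set \<Rightarrow> ('a \<times> 'a) set \<Rightarrow> bool" where
  "oriented_tree VT AT \<longleftrightarrow> finite VT \<and> VT \<noteq> {} \<and> AT \<subseteq> VT \<times> VT \<and>
     (\<forall>v. (v, v) \<notin> AT) \<and> AT \<inter> AT\<inverse> = {} \<and>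
     (\<forall>x\<in>VT. \<forall>y\<in>VT. (x, y) \<in> (AT \<union> AT\<inverse>)\<^sup>*) \<and>
     card AT = card VT - 1"

definition out_tree :: "'a set \<Rightarrow> ('a \<times> 'a) set \<Rightarrow> 'a \<Rightarrow> bool" where
  "out_tree VT AT r \<longleftrightarrow> oriented_tree VT AT \<and> r \<in> VT \<and>
     {v \<in> VT. in_degree AT v = 0} = {r}"

definition leaves :: "'a set \<Rightarrow> ('a \<times> 'a) set \<Rightarrow> 'a set" where
  "leaves VT AT = {v \<in> VT. out_degree AT v = 0}"

end

theory Submission
  imports Defs
begin

lemma card_arcs_sum:
  assumes "finite VT" "AT \<subseteq> VT \<times> VT"
  shows "card AT = (\<Sum>v\<in>VT. card {u. (u, v) \<in> AT})"
proof -
  have e: "prod.swap ` AT = (SIGMA v:VT. {u. (u,v) \<in> AT})" using assms(2) by force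
  have "card (prod.swap ` AT) = card AT" by (rule card_image) (auto simp: inj_on_def)
  moreover have "card (SIGMA v:VT. {u. (u,v) \<in> AT}) = (\<Sum>v\<in>VT. card {u. (u, v) \<in> AT})"
  proof (rule card_SigmaI)
    show "finite VT" by fact
    show "\<forall>v\<in>VT. finite {u. (u, v) \<in> AT}"
      using assms by (auto intro: finite_subset[of _ VT])
  qed
  ultimately show ?thesis using e by simp
qed

lemma ot_basic:
  assumes "out_tree VT AT r"
  shows "finite VT \<and> AT \<subseteq> VT \<times> VT \<and> r \<in> VT \<and> finite AT"
  using assms unfolding out_tree_def oriented_tree_def
  by (auto intro: finite_subset[of AT "VT \<times> VT"])

lemma ot_root:
  assumes "out_tree VT AT r"
  shows "(u, r) \<notin> AT"
proof -
  have "in_degree AT r = 0" using assms unfolding out_tree_def by auto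
  moreover have "finite {u. (u,r) \<in> AT}" using ot_basic[OF assms]
    by (auto intro: finite_subset[of _ VT])
  ultimately show ?thesis by (auto simp: in_degree_def)
qed

lemma ot_indeg1:
  assumes T: "out_tree VT AT r" and v: "v \<in> VT" "v \<noteq> r"
  shows "card {u. (u,v) \<in> AT} = 1"
proof (rule ccontr)
  assume ne: "card {u. (u,v) \<in> AT} \<noteq> 1"
  let ?d = "\<lambda>v. card {u. (u,v) \<in> AT}"
  have b: "finite VT" "AT \<subseteq> VT \<times> VT" "r \<in> VT" using ot_basic[OF T] by auto
  have ge: "\<And>w. w \<in> VT - {r} \<Longrightarrow> 1 \<le> ?d w"
  proof -
    fix w assume w: "w \<in> VT - {r}"
    have "w \<notin> {v \<in> VT. in_degree AT v = 0}" using T w unfolding out_tree_def by auto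
    thus "1 \<le> ?d w" using w by (auto simp: in_degree_def)
  qed
  have dr: "?d r = 0" using ot_root[OF T] by simp
  have "card AT = (\<Sum>w\<in>VT. ?d w)" by (rule card_arcs_sum[OF b(1,2)])
  also have "\<dots> = ?d r + (\<Sum>w\<in>VT-{r}. ?d w)" using b by (simp add: sum.remove)
  finally have s1: "card AT = (\<Sum>w\<in>VT-{r}. ?d w)" using dr by simp
  have "card AT = card VT - 1" using T unfolding out_tree_def oriented_tree_def by auto
  also have "\<dots> = (\<Sum>w\<in>VT-{r}. 1)" using b by simp
  finally have s2: "card AT = (\<Sum>w\<in>VT-{r}. (1::nat))" .
  have "(\<Sum>w\<in>VT-{r}. (1::nat)) < (\<Sum>w\<in>VT-{r}. ?d w)"
  proof (rule sum_strict_mono_ex1)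
    show "finite (VT - {r})" using b by simp
    show "\<forall>x\<in>VT - {r}. 1 \<le> ?d x" using ge by blast
    show "\<exists>a\<in>VT - {r}. 1 < ?d a" using ge[of v] v ne by force
  qed
  thus False using s1 s2 by simp
qed

lemma ot_unique:
  assumes T: "out_tree VT AT r" and "(u,v) \<in> AT" "(u',v) \<in> AT"
  shows "u = u'"
proof -
  have "v \<in> VT" using assms ot_basic[OF T] by auto
  moreover have "v \<noteq> r" using assms ot_root[OF T] by auto
  ultimately have "card {u. (u,v) \<in> AT} = 1" using ot_indeg1[OF T] by auto
  then obtain x where "{u. (u,v) \<in> AT} = {x}" by (auto simp: card_Suc_eq)
  hence "u \<in> {x}" "u' \<in> {x}" using assms(2,3) by (blast, blast)
  thus ?thesis by simp
qed

lemma ot_reach: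
  assumes T: "out_tree VT AT r" and v: "v \<in> VT"
  shows "(r, v) \<in> AT\<^sup>*"
proof -
  have "(r, v) \<in> (AT \<union> AT\<inverse>)\<^sup>*" using T v unfolding out_tree_def oriented_tree_def by auto
  thus ?thesis
  proof (induction rule: rtrancl_induct)
    case base thus ?case by simp
  next
    case (step y z)
    show ?case
    proof (cases "(y,z) \<in> AT")
      case True thus ?thesis using step by auto
    next
      case False
      hence zy: "(z,y) \<in> AT" using step by auto
      hence "y \<noteq> r" using ot_root[OF T] by auto
      then obtain w where w: "(r,w) \<in> AT\<^sup>*" "(w,y) \<in> AT" using step.IH
        by (auto elim: rtranclE)
      have "w = z" using ot_unique[OF T w(2) zy] .
      thus ?thesis using w by simp
    qed
  qed
qed

lemma ot_intro:
  assumes fin: "finite VT" and rV: "r \<in> VT" and sub: "AT \<subseteq> VT \<times> VT"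
    and noin: "\<And>u. (u, r) \<notin> AT"
    and uniq: "\<And>u u' v. (u, v) \<in> AT \<Longrightarrow> (u', v) \<in> AT \<Longrightarrow> u = u'"
    and reach: "\<And>v. v \<in> VT \<Longrightarrow> (r, v) \<in> AT\<^sup>*"
  shows "out_tree VT AT r"
proof -
  have acyc0: "(v,v) \<notin> AT\<^sup>+" if "(r,v) \<in> AT\<^sup>*" for v
    using that
  proof (induction rule: rtrancl_induct)
    case base
    show ?case
    proof
      assume "(r,r) \<in> AT\<^sup>+"
      then obtain w where "(w,r) \<in> AT" by (auto elim: tranclE)
      thus False using noin by auto
    qed
  next
    case (step y z)
    show ?case
    proof
      assume "(z,z) \<in> AT\<^sup>+"
      thus False
      proof (cases rule: tranclE)
        case base
        hence "z = y" using uniq step(2) by blast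
        thus False using step base by auto
      next
        case (step c)
        hence "c = y" using uniq \<open>(y,z) \<in> AT\<close> by blast
        hence "(y,y) \<in> AT\<^sup>+" using step \<open>(y,z) \<in> AT\<close>
          by (meson trancl_into_trancl2)
        thus False using \<open>(y,y) \<notin> AT\<^sup>+\<close> by simp
      qed
    qed
  qed
  have acyc: "(v,v) \<notin> AT\<^sup>+" for v
  proof
    assume a: "(v,v) \<in> AT\<^sup>+"
    then obtain w where "(v,w) \<in> AT" by (auto elim: converse_tranclE)
    hence "v \<in> VT" using sub by auto
    thus False using acyc0 reach a by blast
  qed
  have loops: "\<forall>v. (v,v) \<notin> AT" using acyc by blast
  have anti: "AT \<inter> AT\<inverse> = {}"
  proof (rule ccontr)
    assume "AT \<inter> AT\<inverse> \<noteq> {}"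
    then obtain u v where "(u,v) \<in> AT" "(v,u) \<in> AT" by auto
    hence "(u,u) \<in> AT\<^sup>+" by (meson trancl.simps)
    thus False using acyc by simp
  qed
  have conn: "\<forall>x\<in>VT. \<forall>y\<in>VT. (x, y) \<in> (AT \<union> AT\<inverse>)\<^sup>*"
  proof (intro ballI)
    fix x y assume x: "x \<in> VT" and y: "y \<in> VT"
    let ?S = "AT \<union> AT\<inverse>"
    have "(r,x) \<in> ?S\<^sup>*" using reach[OF x] rtrancl_mono[of AT ?S] by blast
    hence "(x,r) \<in> (?S\<inverse>)\<^sup>*" by (rule rtrancl_converseI)
    moreover have "?S\<inverse> = ?S" by auto
    ultimately have xr: "(x,r) \<in> ?S\<^sup>*" by simp
    have "(r,y) \<in> ?S\<^sup>*" using reach[OF y] rtrancl_mono[of AT ?S] by blast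
    thus "(x,y) \<in> ?S\<^sup>*" using xr by simp
  qed
  have img: "snd ` AT = VT - {r}"
  proof
    show "snd ` AT \<subseteq> VT - {r}" using sub noin by force
    show "VT - {r} \<subseteq> snd ` AT"
    proof
      fix v assume v: "v \<in> VT - {r}"
      then obtain w where "(w,v) \<in> AT" using reach[of v] by (auto elim: rtranclE)
      thus "v \<in> snd ` AT" by force
    qed
  qed
  have inj: "inj_on snd AT" using uniq by (auto simp: inj_on_def)
  have "card AT = card (VT - {r})" using card_image[OF inj] img by simp
  hence cardAT: "card AT = card VT - 1" using rV fin by simp
  have indeg: "{v \<in> VT. in_degree AT v = 0} = {r}"
  proof -
    have "in_degree AT v \<noteq> 0" if v: "v \<in> VT" "v \<noteq> r" for v
    proof -
      obtain w where "(w,v) \<in> AT" using reach[of v] v by (auto elim: rtranclE)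
      moreover have "finite {u. (u,v) \<in> AT}" using sub fin by (auto intro: finite_subset[of _ VT])
      ultimately show ?thesis by (auto simp: in_degree_def)
    qed
    moreover have "in_degree AT r = 0" using noin by (simp add: in_degree_def)
    ultimately show ?thesis using rV by blast
  qed
  show ?thesis unfolding out_tree_def oriented_tree_def
    using fin rV sub loops anti conn cardAT indeg by auto
qed


lemma extend:
  assumes T: "out_tree VT AT r" and VTV: "VT \<subseteq> V" and ATA: "AT \<subseteq> A"
    and P: "dipath A s r p" and pV: "set p \<subseteq> V"
  shows "\<exists>VT' AT'. VT' \<subseteq> V \<and> AT' \<subseteq> A \<and> out_tree VT' AT' s \<and>
           card (leaves VT AT - (set p - {r})) \<le> card (leaves VT' AT')"
proof -
  define PA where "PA = {(p!i, p!Suc i)| i. Suc i < length p}"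
  define VT' where "VT' = VT \<union> set p"
  define AT' where "AT' = {e \<in> AT. snd e \<notin> set p} \<union> PA"
  have pne: "p \<noteq> []" and dist: "distinct p" and hd: "hd p = s" and lst: "last p = r"
    and arcs: "\<And>i. Suc i < length p \<Longrightarrow> (p ! i, p ! Suc i) \<in> A"
    using P unfolding dipath_def by auto
  have b: "finite VT" "AT \<subseteq> VT \<times> VT" "r \<in> VT" using ot_basic[OF T] by auto
  have PA_A: "PA \<subseteq> A" using arcs unfolding PA_def by auto
  have PA_set: "PA \<subseteq> set p \<times> set p" unfolding PA_def by auto
  have s0: "p!0 = s" using pne hd by (simp add: hd_conv_nth)
  have rl: "p ! (length p - 1) = r" using pne lst by (simp add: last_conv_nth)
  have noin_s: "(u, s) \<notin> PA" for u
  proof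
    assume "(u,s) \<in> PA"
    then obtain i where i: "Suc i < length p" "p ! Suc i = s" unfolding PA_def by auto
    hence "p ! Suc i = p ! 0" using s0 by simp
    hence "Suc i = 0" using nth_eq_iff_index_eq[OF dist] i(1) by force
    thus False by simp
  qed
  have PA_unique: "u = u'" if a1: "(u,v) \<in> PA" and a2: "(u',v) \<in> PA" for u u' v
  proof -
    obtain i where i: "Suc i < length p" "u = p!i" "v = p!Suc i" using a1 unfolding PA_def by blast
    obtain j where j: "Suc j < length p" "u' = p!j" "v = p!Suc j" using a2 unfolding PA_def by blast
    have "Suc i = Suc j" using i j nth_eq_iff_index_eq[OF dist, of "Suc i" "Suc j"] by auto
    thus ?thesis using i j by simp
  qed
  have PA_out_r: "(r, w) \<notin> PA" for w
  proof
    assume "(r,w) \<in> PA"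
    then obtain i where i: "Suc i < length p" "p ! i = r" unfolding PA_def by auto
    hence "p ! i = p ! (length p - 1)" using rl by simp
    hence "i = length p - 1" using nth_eq_iff_index_eq[OF dist] i(1) by force
    thus False using i by simp
  qed
  have reachP: "k < length p \<Longrightarrow> (s, p!k) \<in> AT'\<^sup>*" for k
  proof (induction k)
    case 0 thus ?case using s0 by simp
  next
    case (Suc k)
    hence "(p!k, p!Suc k) \<in> AT'" unfolding AT'_def PA_def by auto
    thus ?case using Suc by (meson Suc_lessD rtrancl.simps)
  qed
  have reachP': "v \<in> set p \<Longrightarrow> (s, v) \<in> AT'\<^sup>*" for v
    using reachP by (auto simp: in_set_conv_nth)
  have reachT: "(r, v) \<in> AT\<^sup>* \<Longrightarrow> (s, v) \<in> AT'\<^sup>*" for v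
  proof (induction rule: rtrancl_induct)
    case base show ?case using reachP' lst pne by auto
  next
    case (step y z)
    show ?case
    proof (cases "z \<in> set p")
      case True thus ?thesis using reachP' by simp
    next
      case False
      hence "(y,z) \<in> AT'" using step unfolding AT'_def by auto
      thus ?thesis using step by (meson rtrancl.simps)
    qed
  qed
  have OT: "out_tree VT' AT' s"
  proof (rule ot_intro)
    show "finite VT'" unfolding VT'_def using b by simp
    show "s \<in> VT'" unfolding VT'_def using hd pne by auto
    show "AT' \<subseteq> VT' \<times> VT'" unfolding VT'_def AT'_def using b PA_set by auto
    show "(u, s) \<notin> AT'" for u unfolding AT'_def using noin_s hd pne by auto
    show "u = u'" if "(u, v) \<in> AT'" "(u', v) \<in> AT'" for u u' v
    proof (cases "v \<in> set p")
      case True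
      hence "(u,v) \<in> PA" "(u',v) \<in> PA" using that unfolding AT'_def by auto
      thus ?thesis by (rule PA_unique)
    next
      case False
      hence "(u,v) \<in> AT" "(u',v) \<in> AT" using that PA_set unfolding AT'_def by auto
      thus ?thesis by (rule ot_unique[OF T])
    qed
    show "(s, v) \<in> AT'\<^sup>*" if "v \<in> VT'" for v
    proof (cases "v \<in> set p")
      case True thus ?thesis by (rule reachP')
    next
      case False
      hence "v \<in> VT" using that unfolding VT'_def by auto
      thus ?thesis using reachT ot_reach[OF T] by blast
    qed
  qed
  have lsub: "leaves VT AT - (set p - {r}) \<subseteq> leaves VT' AT'"
  proof
    fix v assume v: "v \<in> leaves VT AT - (set p - {r})"
    have fo: "finite {w. (v,w) \<in> AT}" using b by (auto intro: finite_subset[of _ VT])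
    have "{w. (v,w) \<in> AT} = {}" using v fo by (auto simp: leaves_def out_degree_def)
    moreover have "(v,w) \<notin> PA" for w
    proof
      assume "(v,w) \<in> PA"
      hence "v \<in> set p" using PA_set by auto
      hence "v = r" using v by auto
      thus False using PA_out_r \<open>(v,w) \<in> PA\<close> by simp
    qed
    ultimately have "{w. (v,w) \<in> AT'} = {}" unfolding AT'_def by auto
    thus "v \<in> leaves VT' AT'" using v unfolding leaves_def out_degree_def VT'_def by auto
  qed
  have "finite (leaves VT' AT')" unfolding leaves_def VT'_def using b by simp
  hence "card (leaves VT AT - (set p - {r})) \<le> card (leaves VT' AT')" using lsub card_mono by blast
  moreover have "VT' \<subseteq> V" unfolding VT'_def using VTV pV by auto
  moreover have "AT' \<subseteq> A" unfolding AT'_def using ATA PA_A by auto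
  ultimately show ?thesis using OT by blast
qed

lemma dipath_set:
  assumes "dipath A s r p" "A \<subseteq> V \<times> V" "s \<in> V"
  shows "set p \<subseteq> V"
proof
  fix v assume "v \<in> set p"
  then obtain k where k: "k < length p" "v = p!k" by (auto simp: in_set_conv_nth)
  show "v \<in> V"
  proof (cases k)
    case 0 thus ?thesis using k assms by (simp add: dipath_def hd_conv_nth)
  next
    case (Suc j)
    hence "(p!j, p!k) \<in> A" using assms k unfolding dipath_def by auto
    thus ?thesis using assms k by auto
  qed
qed

theorem lemma4:
  fixes V :: "'a set" and A :: "('a \<times> 'a) set" and s r :: 'a
    and VT :: "'a set" and AT :: "('a \<times> 'a) set" and l :: nat
  assumes "digraph V A"
    and "card V \<ge> 2"
    and "s \<in> V"
    and "\<forall>v\<in>V. (s, v) \<in> A\<^sup>*"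
    and "VT \<subseteq> V" and "AT \<subseteq> A"
    and "out_tree VT AT r"
    and "r \<in> diblock V A s"
    and "card (leaves VT AT) = l"
  shows "\<exists>VT' AT'. VT' \<subseteq> V \<and> AT' \<subseteq> A \<and> out_tree VT' AT' s \<and>
           real (card (leaves VT' AT')) \<ge> (real l - 1) / 2"
proof -
  have AV: "A \<subseteq> V \<times> V" and noloop: "\<And>v. (v,v) \<notin> A" using assms(1) unfolding digraph_def by auto
  let ?L = "leaves VT AT"
  have finL: "finite ?L" using ot_basic[OF assms(7)] unfolding leaves_def by simp
  have ext: "\<And>p. dipath A s r p \<Longrightarrow> \<exists>VT' AT'. VT' \<subseteq> V \<and> AT' \<subseteq> A \<and> out_tree VT' AT' s \<and>
           card (?L - (set p - {r})) \<le> card (leaves VT' AT')"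
  proof -
    fix p assume "dipath A s r p"
    moreover hence "set p \<subseteq> V" by (rule dipath_set[OF _ AV assms(3)])
    ultimately show "?thesis p" by (rule extend[OF assms(7,5,6)])
  qed
  have Ls: "l - 1 \<le> card (?L - {s})"
    using finL assms(9) by (cases "s \<in> ?L") (auto simp: card_Diff_singleton)
  have single: ?thesis if d1: "dipath A s r p" and d2: "set p - {r} \<subseteq> {s}" for p
  proof -
    obtain VT' AT' where t: "VT' \<subseteq> V" "AT' \<subseteq> A" "out_tree VT' AT' s"
      "card (?L - (set p - {r})) \<le> card (leaves VT' AT')" using ext[OF d1] by blast
    have "card (?L - {s}) \<le> card (?L - (set p - {r}))"
      using finL d2 by (intro card_mono) auto
    hence "l - 1 \<le> card (leaves VT' AT')" using Ls t(4) by linarith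
    hence "real l - 1 \<le> real (card (leaves VT' AT'))" by linarith
    moreover have "0 \<le> real (card (leaves VT' AT'))" by simp
    ultimately have "(real l - 1) / 2 \<le> real (card (leaves VT' AT'))" by (simp add: field_simps)
    thus ?thesis using t by blast
  qed
  consider "r \<in> V \<and> bireachable A s r" | "r = s" | "(s, r) \<in> A"
    using assms(8) unfolding diblock_def by auto
  thus ?thesis
  proof cases
    case 2
    show ?thesis by (rule single[of "[s]"]) (auto simp: dipath_def 2)
  next
    case 3
    hence "r \<noteq> s" using noloop by auto
    show ?thesis
    proof (rule single[of "[s, r]"])
      show "dipath A s r [s, r]" using 3 \<open>r \<noteq> s\<close> unfolding dipath_def
        by (auto simp: less_Suc_eq)
    qed auto
  next
    case 1
    then obtain p q where pq: "dipath A s r p" "dipath A s r q" "set p \<inter> set q \<subseteq> {s, r}"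
      unfolding bireachable_def by auto
    obtain VT1 AT1 where t1: "VT1 \<subseteq> V" "AT1 \<subseteq> A" "out_tree VT1 AT1 s"
      "card (?L - (set p - {r})) \<le> card (leaves VT1 AT1)" using ext[OF pq(1)] by blast
    obtain VT2 AT2 where t2: "VT2 \<subseteq> V" "AT2 \<subseteq> A" "out_tree VT2 AT2 s"
      "card (?L - (set q - {r})) \<le> card (leaves VT2 AT2)" using ext[OF pq(2)] by blast
    let ?X = "?L - (set p - {r})" and ?Y = "?L - (set q - {r})"
    have "card ?X + card ?Y = card (?X \<union> ?Y) + card (?X \<inter> ?Y)"
      using finL by (intro card_Un_Int) auto
    moreover have "card (?L - {s}) \<le> card (?X \<union> ?Y)"
      using finL pq(3) by (intro card_mono) auto
    ultimately have "l - 1 \<le> card (leaves VT1 AT1) + card (leaves VT2 AT2)"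
      using Ls t1(4) t2(4) by linarith
    hence "real l - 1 \<le> real (card (leaves VT1 AT1)) + real (card (leaves VT2 AT2))" by linarith
    hence "(real l - 1) / 2 \<le> real (card (leaves VT1 AT1)) \<or>
           (real l - 1) / 2 \<le> real (card (leaves VT2 AT2))" by (simp add: field_simps, linarith)
    thus ?thesis using t1 t2 by blast
  qed
qed

end
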